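(* (i) Let $\mathbf D:\mathbb{R}^{d\times N}\to\mathbb{R}^{d\times N}$ be $C^1$ with $\mathbf D(\mathbf T)\cdot\mathbf T\ge C_1|\mathbf T|-C_0$, $|\mathbf D(\mathbf T)|\le C_2$ and $h(|\mathbf T|)|\mathbf B|^2\le\sum\mathcal A_{i\nu j\mu}(\mathbf T)\mathbf B_{i\nu}\mathbf B_{j\mu}\le C_2|\mathbf B|^2/(1+|\mathbf T|)$ for all $\mathbf T,\mathbf B$, where $\mathcal A_{i\nu j\mu}=\partial\mathbf D_{i\nu}/\partial\mathbf T_{j\mu}$, $C_0\ge0$, $C_1,C_2>0$, and $h$ is positive, nonincreasing and continuous. Let $\Omega\subset\mathbb{R}^d$ be a bounded domain and $\mathbf u_0\in W^{1,\infty}(\Omega)^N$. Then the following are equivalent: (a) there is a compact set $K$ contained in the interior of $\mathbf D(\mathbb{R}^{d\times N})$ with $\nabla\mathbf u_0(x)\in K$ for a.e. $x\in\Omega$; (b) there is $c>0$ with $$c\le\liminf_{n\to\infty}\Big(\operatorname*{ess\,inf}_{x\in\Omega}\ \inf_{\mathbf T\in\mathbb{R}^{d\times N},|\mathbf T|=1}(\mathbf D(n\mathbf T)-\nabla\mathbf u_0(x))\cdot\mathbf T\Big).$$ (ii) Analogously, let $\boldsymbol\varepsilon^*:\mathbb{R}^{d\times d}_{sym}\to\mathbb{R}^{d\times d}_{sym}$ be $C^1$ with $\boldsymbol\varepsilon^*(\mathbf T)\cdot\mathbf T\ge C_1|\mathbf T|-C_0$, $|\boldsymbol\varepsilon^*(\mathbf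 T)|\le C_2$ and $h(|\mathbf T|)|\mathbf B|^2\le\sum\mathcal A_{ijkl}(\mathbf T)\mathbf B_{ij}\mathbf B_{kl}\le C_2|\mathbf B|^2/(1+|\mathbf T|)$ for all symmetric $\mathbf T,\mathbf B$, where $\mathcal A_{ijkl}=\partial\boldsymbol\varepsilon^*_{ij}/\partial\mathbf T_{kl}$. For $\mathbf u_0\in W^{1,1}(\Omega)^d$ the following are equivalent: (a') $\boldsymbol\varepsilon(\mathbf u_0)(x)$ lies for a.e. $x$ in a compact set $K$ contained in the interior of $\boldsymbol\varepsilon^*(\mathbb{R}^{d\times d}_{sym})$; (b') there is $c>0$ with $c\le\liminf_{n\to\infty}\big(\operatorname*{ess\,inf}_{x\in\Omega}\inf_{\mathbf T\in\mathbb{R}^{d\times d}_{sym},|\mathbf T|=1}(\boldsymbol\varepsilon^*(n\mathbf T)-\boldsymbol\varepsilon(\mathbf u_0)(x))\cdot\mathbf T\big)$.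
   Context: $\mathbf A\cdot\mathbf B$ is the Frobenius inner product and $|\cdot|$ the Euclidean norm of matrices; $\boldsymbol\varepsilon(\mathbf u)=\frac12(\nabla\mathbf u+(\nabla\mathbf u)^T)$; $\mathbb{R}^{d\times d}_{sym}$ is the space of symmetric matrices. *)

theory Defs
  imports "HOL-Analysis.Analysis"
begin

fun Ck :: "nat \<Rightarrow> ('a::euclidean_space \<Rightarrow> real) \<Rightarrow> bool" where
  "Ck 0 f = continuous_on UNIV f"
| "Ck (Suc k) f = (f differentiable_on UNIV \<and>
      (\<forall>i\<in>Basis. Ck k (\<lambda>x. frechet_derivative f (at x) i)))"

definition smooth_fun :: "('a::euclidean_space \<Rightarrow> real) \<Rightarrow> bool" where
  "smooth_fun f \<longleftrightarrow> (\<forall>k. Ck k f)"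

definition test_fun :: "('a::euclidean_space) set \<Rightarrow> ('a \<Rightarrow> real) \<Rightarrow> bool" where
  "test_fun \<Omega> \<phi> \<longleftrightarrow> smooth_fun \<phi> \<and> compact (closure {x. \<phi> x \<noteq> 0})
      \<and> closure {x. \<phi> x \<noteq> 0} \<subseteq> \<Omega>"

text \<open>Weak gradient: (grad u)_{i nu} = d_i u_nu, stored as G x $ i $ nu.\<close>
definition weak_gradient ::
  "(real^'d) set \<Rightarrow> (real^'d \<Rightarrow> real^'n) \<Rightarrow> (real^'d \<Rightarrow> real^'n^'d) \<Rightarrow> bool" where
  "weak_gradient \<Omega> u G \<longleftrightarrow>
     (\<forall>K. compact K \<and> K \<subseteq> \<Omega> \<longrightarrow> integrable (lebesgue_on K) u \<and> integrable (lebesgue_on K) G)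
   \<and> (\<forall>\<phi> i \<nu>. test_fun \<Omega> \<phi> \<longrightarrow>
        integral\<^sup>L (lebesgue_on \<Omega>) (\<lambda>x. u x $ \<nu> * frechet_derivative \<phi> (at x) (axis i 1))
        = - integral\<^sup>L (lebesgue_on \<Omega>) (\<lambda>x. G x $ i $ \<nu> * \<phi> x))"

definition Linf :: "('a::euclidean_space) set \<Rightarrow> ('a \<Rightarrow> 'b::euclidean_space) \<Rightarrow> bool" where
  "Linf \<Omega> f \<longleftrightarrow> f \<in> borel_measurable (lebesgue_on \<Omega>) \<and>
     (\<exists>M. AE x in lebesgue_on \<Omega>. norm (f x) \<le> M)"

definition W1inf :: "(real^'d) set \<Rightarrow> (real^'d \<Rightarrow> real^'n) \<Rightarrow> bool" where
  "W1inf \<Omega> u \<longleftrightarrow> Linf \<Omega> u \<and> (\<exists>G. weak_gradient \<Omega> u G \<and> Linf \<Omega> G)"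

definition W11 :: "(real^'d) set \<Rightarrow> (real^'d \<Rightarrow> real^'n) \<Rightarrow> bool" where
  "W11 \<Omega> u \<longleftrightarrow> integrable (lebesgue_on \<Omega>) u \<and>
     (\<exists>G. weak_gradient \<Omega> u G \<and> integrable (lebesgue_on \<Omega>) G)"

definition essinf :: "'a measure \<Rightarrow> ('a \<Rightarrow> ereal) \<Rightarrow> ereal" where
  "essinf M f = Sup {z. AE x in M. z \<le> f x}"

definition Sym :: "(real^'d^'d) set" where
  "Sym = {T. transpose T = T}"

definition sym_grad :: "(real^'d \<Rightarrow> real^'d^'d) \<Rightarrow> real^'d \<Rightarrow> real^'d^'d" where
  "sym_grad G x = (1/2) *\<^sub>R (G x + transpose (G x))"

end

theory Submission
  imports Defs
begin

lemma dini_pos: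
  fixes F :: "nat \<Rightarrow> 'a::metric_space \<Rightarrow> real"
  assumes C: "compact C" and cont: "\<And>m. continuous_on C (F m)"
    and mono: "\<And>x m n. x \<in> C \<Longrightarrow> m \<le> n \<Longrightarrow> F m x \<le> F n x"
    and pos: "\<And>x. x \<in> C \<Longrightarrow> \<exists>m. F m x > 0"
  shows "\<exists>r>0. \<exists>N. \<forall>n\<ge>N. \<forall>x\<in>C. F n x \<ge> r"
proof (rule ccontr)
  assume "\<not> ?thesis"
  hence "\<forall>k::nat. \<exists>n\<ge>k. \<exists>x\<in>C. F n x < 1 / (real k + 1)"
    by (metis divide_pos_pos linorder_not_le of_nat_0_le_iff zero_less_one add_nonneg_pos)
  then obtain nn xx where nn: "\<And>k. nn k \<ge> k" and xx: "\<And>k. xx k \<in> C"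
     and lt: "\<And>k. F (nn k) (xx k) < 1 / (real k + 1)"
    by metis
  from C xx obtain l \<sigma> where l: "l \<in> C" and \<sigma>: "strict_mono \<sigma>" and lim: "(xx \<circ> \<sigma>) \<longlonglongrightarrow> l"
    unfolding compact_def by metis
  obtain m where m: "F m l > 0" using pos[OF l] by blast
  have "((\<lambda>k. F m (xx (\<sigma> k))) \<longlongrightarrow> F m l) sequentially"
    using continuous_on_tendsto_compose[OF cont[of m] lim[unfolded comp_def] l] xx by auto
  hence ev1: "eventually (\<lambda>k. F m (xx (\<sigma> k)) > F m l / 2) sequentially"
    using m by (intro order_tendstoD(1)) auto
  have "((\<lambda>k. 1 / (real k + 1)) \<longlongrightarrow> 0) sequentially"
    using LIMSEQ_inverse_real_of_nat by (simp add: inverse_eq_divide add.commute)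
  hence "eventually (\<lambda>k. 1 / (real k + 1) < F m l / 2) sequentially"
    using m by (intro order_tendstoD(2)) auto
  hence ev2: "eventually (\<lambda>k. 1 / (real (\<sigma> k) + 1) < F m l / 2) sequentially"
  proof -
    from \<open>eventually (\<lambda>k. 1 / (real k + 1) < F m l / 2) sequentially\<close>
    obtain K where K: "\<And>k. k \<ge> K \<Longrightarrow> 1 / (real k + 1) < F m l / 2"
      unfolding eventually_sequentially by blast
    show ?thesis unfolding eventually_sequentially
      using K seq_suble[OF \<sigma>] order_trans by blast
  qed
  have ev3: "eventually (\<lambda>k. m \<le> \<sigma> k) sequentially"
    unfolding eventually_sequentially using seq_suble[OF \<sigma>] order_trans by blast
  from eventually_conj[OF ev1 eventually_conj[OF ev2 ev3]] obtain K where
    KK: "\<And>k. k \<ge> K \<Longrightarrow> F m (xx (\<sigma> k)) > F m l / 2 \<and> 1 / (real (\<sigma> k) + 1) < F m l / 2 \<and> m \<le> \<sigma> k"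
    unfolding eventually_sequentially by blast
  have k: "F m (xx (\<sigma> K)) > F m l / 2" "1 / (real (\<sigma> K) + 1) < F m l / 2" "m \<le> \<sigma> K"
    using KK[of K] by auto
  have "F m (xx (\<sigma> K)) \<le> F (nn (\<sigma> K)) (xx (\<sigma> K))"
    using mono[OF xx, of m "nn (\<sigma> K)"] nn[of "\<sigma> K"] k(3) by auto
  with lt[of "\<sigma> K"] k show False by linarith
qed

lemma surj_brouwer:
  fixes E :: "'a::euclidean_space \<Rightarrow> 'a"
  assumes S: "subspace S" and ES: "\<And>T. T \<in> S \<Longrightarrow> E T \<in> S" and cont: "continuous_on S E"
    and z: "z \<in> S" and R: "R > 0"
    and coer: "\<And>T. T \<in> S \<Longrightarrow> norm T = R \<Longrightarrow> inner (E T - z) T > 0"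
  shows "z \<in> E ` S"
proof (rule ccontr)
  assume nz: "z \<notin> E ` S"
  define B where "B = S \<inter> cball 0 R"
  define f where "f T = - (R / norm (E T - z)) *\<^sub>R (E T - z)" for T
  have ne: "\<And>T. T \<in> S \<Longrightarrow> E T - z \<noteq> 0" using nz by force
  have "compact B" unfolding B_def
    using closed_subspace[OF S] by (simp add: closed_Int_compact)
  moreover have "convex B" unfolding B_def using subspace_imp_convex[OF S] by (simp add: convex_Int)
  moreover have "B \<noteq> {}" unfolding B_def using subspace_0[OF S] R by auto
  moreover have "continuous_on B f" unfolding f_def B_def
    apply (intro continuous_intros continuous_on_subset[OF cont])
    using ne by auto
  moreover have "f \<in> B \<rightarrow> B"
  proof
    fix T assume T: "T \<in> B"
    hence TS: "T \<in> S" by (simp add: B_def)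
    have "f T \<in> S" unfolding f_def using ES[OF TS] z S
      by (intro subspace_neg subspace_scale subspace_diff) auto
    moreover have "norm (f T) = R" unfolding f_def using ne[OF TS] R by simp
    ultimately show "f T \<in> B" by (simp add: B_def)
  qed
  ultimately obtain T where T: "T \<in> B" "f T = T" by (rule brouwer)
  hence TS: "T \<in> S" by (simp add: B_def)
  have nT: "norm (f T) = R" unfolding f_def using ne[OF TS] R by simp
  hence nT': "norm T = R" using T(2) by simp
  have "inner (E T - z) T = inner (E T - z) (f T)" using T(2) by simp
  also have "\<dots> = - (R / norm (E T - z)) * (norm (E T - z))\<^sup>2"
    unfolding f_def by (simp add: power2_norm_eq_inner)
  also have "\<dots> = - R * norm (E T - z)" using ne[OF TS] by (simp add: power2_eq_square)
  also have "\<dots> < 0" using ne[OF TS] R by simp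
  finally show False using coer[OF TS nT'] by simp
qed
lemma mono_from_deriv:
  fixes E :: "'a::euclidean_space \<Rightarrow> 'a" and E' :: "'a \<Rightarrow> 'a \<Rightarrow>\<^sub>L 'a"
  assumes S: "subspace S"
    and der: "\<forall>T\<in>S. (E has_derivative blinfun_apply (E' T)) (at T within S)"
    and pos: "\<forall>T\<in>S. \<forall>B\<in>S. inner (blinfun_apply (E' T) B) B \<ge> 0"
    and A: "A \<in> S" and B: "B \<in> S"
  shows "inner (E A - E B) (A - B) \<ge> 0"
proof -
  define p where "p t = B + t *\<^sub>R (A - B)" for t :: real
  have pS: "p t \<in> S" for t unfolding p_def using S A B
    by (intro subspace_add subspace_scale subspace_diff) auto
  have ABS: "A - B \<in> S" using S A B by (simp add: subspace_diff)
  have dp: "(p has_derivative (\<lambda>s. s *\<^sub>R (A - B))) (at t)" for t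
    unfolding p_def by (auto intro!: derivative_eq_intros)
  have dEp: "((\<lambda>t. E (p t)) has_derivative (\<lambda>s. blinfun_apply (E' (p t)) (s *\<^sub>R (A - B)))) (at t)" for t
    using has_derivative_in_compose2[of S E "\<lambda>x. blinfun_apply (E' x)" p UNIV t, OF _ _ _ dp] der pS by auto
  have dg: "((\<lambda>t. inner (E (p t)) (A - B)) has_real_derivative inner (blinfun_apply (E' (p t)) (A - B)) (A - B)) (at t)" for t
    apply (rule has_derivative_imp_has_field_derivative)
     apply (rule has_derivative_inner_left[OF dEp])
    by (simp add: blinfun.scaleR_right)
  have "inner (E (p 0)) (A - B) \<le> inner (E (p 1)) (A - B)"
    apply (rule DERIV_nonneg_imp_nondecreasing[of 0 1])
    using dg pos pS ABS by auto
  thus ?thesis unfolding p_def by (simp add: inner_diff_left)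
qed

lemma cont_from_deriv:
  fixes E :: "'a::euclidean_space \<Rightarrow> 'a" and E' :: "'a \<Rightarrow> 'a \<Rightarrow>\<^sub>L 'a"
  assumes der: "\<forall>T\<in>S. (E has_derivative blinfun_apply (E' T)) (at T within S)"
  shows "continuous_on S E"
  using der has_derivative_continuous continuous_on_eq_continuous_within by blast

locale mop =
  fixes S :: "'a::euclidean_space set" and E :: "'a \<Rightarrow> 'a" and C2 :: real
  assumes S: "subspace S" and ES: "\<And>T. T \<in> S \<Longrightarrow> E T \<in> S"
    and cont: "continuous_on S E"
    and mono: "\<And>A B. A \<in> S \<Longrightarrow> B \<in> S \<Longrightarrow> inner (E A - E B) (A - B) \<ge> 0"
    and bnd: "\<And>T. T \<in> S \<Longrightarrow> norm (E T) \<le> C2"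
    and C2: "C2 > 0"
begin

lemma scS: "T \<in> S \<Longrightarrow> a *\<^sub>R T \<in> S" using S by (simp add: subspace_scale)

lemma monoN:
  assumes T: "T \<in> S" and mn: "m \<le> n"
  shows "inner (E (real m *\<^sub>R T)) T \<le> inner (E (real n *\<^sub>R T)) T"
proof (cases "m = n")
  case False
  hence pos: "real n - real m > 0" using mn by simp
  have "0 \<le> inner (E (real n *\<^sub>R T) - E (real m *\<^sub>R T)) (real n *\<^sub>R T - real m *\<^sub>R T)"
    by (rule mono) (auto intro: scS T)
  also have "\<dots> = (real n - real m) * inner (E (real n *\<^sub>R T) - E (real m *\<^sub>R T)) T"
    by (simp add: scaleR_diff_left[symmetric] del: scaleR_diff_left)
  finally have "0 \<le> inner (E (real n *\<^sub>R T) - E (real m *\<^sub>R T)) T"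
    using pos by (simp add: zero_le_mult_iff)
  thus ?thesis by (simp add: inner_diff_left)
qed simp

lemma sphere_compact: "compact {T\<in>S. norm T = 1}"
proof -
  have "{T\<in>S. norm T = 1} = S \<inter> sphere 0 1" by auto
  thus ?thesis using closed_subspace[OF S] by (simp add: closed_Int_compact)
qed

lemma coreA:
  assumes K: "compact K" "K \<subseteq> (top_of_set S) interior_of (E ` S)"
  shows "\<exists>r>0. \<exists>N. \<forall>n\<ge>N. \<forall>y\<in>K. \<forall>T\<in>S. norm T = 1 \<longrightarrow> r \<le> inner (E (real n *\<^sub>R T) - y) T"
proof -
  define C where "C = {T\<in>S. norm T = 1} \<times> K"
  define F where "F m p = inner (E (real m *\<^sub>R fst p) - snd p) (fst p)" for m p
  have "compact C" unfolding C_def using sphere_compact K(1) by (rule compact_Times)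
  moreover have "continuous_on C (F m)" for m
    unfolding F_def
    apply (intro continuous_intros continuous_on_compose2[OF cont])
    by (auto simp: C_def intro: scS)
  moreover have "F m p \<le> F n p" if "p \<in> C" "m \<le> n" for p m n
    using monoN[of "fst p" m n] that unfolding F_def C_def by (auto simp: inner_diff_left)
  moreover have "\<exists>m. F m p > 0" if p: "p \<in> C" for p
  proof -
    obtain T y where p: "p = (T, y)" and T: "T \<in> S" "norm T = 1" and y: "y \<in> K"
      using p unfolding C_def by auto
    have yi: "y \<in> (top_of_set S) interior_of (E ` S)" using y K(2) by auto
    hence yS: "y \<in> S" using interior_of_subset_topspace by fastforce
    from yi obtain V where V: "openin (top_of_set S) V" "y \<in> V" "V \<subseteq> E ` S"
      unfolding interior_of_def by auto
    then obtain \<rho> where \<rho>: "\<rho> > 0" "\<And>x'. x' \<in> S \<Longrightarrow> dist x' y < \<rho> \<Longrightarrow> x' \<in> V"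
      unfolding openin_euclidean_subtopology_iff by meson
    define w where "w = y + (\<rho>/2) *\<^sub>R T"
    have wS: "w \<in> S" unfolding w_def using S yS T by (simp add: subspace_add subspace_scale)
    have "dist w y = \<rho> / 2" unfolding w_def dist_norm using T \<rho> by simp
    hence "w \<in> E ` S" using \<rho> V(3) wS by auto
    then obtain Q where Q: "Q \<in> S" "E Q = w" by auto
    define M where "M = (C2 + norm w) * norm Q"
    have M0: "M \<ge> 0" unfolding M_def using C2 by simp
    obtain m :: nat where m: "4 * M / \<rho> + 1 < real m" using reals_Archimedean2 by blast
    have mpos: "real m > 0" using m M0 \<rho> by (smt (verit) divide_nonneg_pos)
    have mT: "real m *\<^sub>R T \<in> S" using scS T by auto
    have "0 \<le> inner (E (real m *\<^sub>R T) - E Q) (real m *\<^sub>R T - Q)"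
      by (rule mono[OF mT Q(1)])
    hence "inner (E (real m *\<^sub>R T) - E Q) Q \<le> real m * inner (E (real m *\<^sub>R T) - w) T"
      using Q by (simp add: inner_diff_right)
    moreover have "- M \<le> inner (E (real m *\<^sub>R T) - E Q) Q"
    proof -
      have "\<bar>inner (E (real m *\<^sub>R T) - E Q) Q\<bar> \<le> norm (E (real m *\<^sub>R T) - E Q) * norm Q"
        by (rule Cauchy_Schwarz_ineq2)
      also have "\<dots> \<le> (C2 + norm w) * norm Q"
        apply (rule mult_right_mono)
        using norm_triangle_ineq4[of "E (real m *\<^sub>R T)" "E Q"] bnd[OF mT] Q by auto
      finally show ?thesis unfolding M_def by linarith
    qed
    ultimately have "- M \<le> real m * inner (E (real m *\<^sub>R T) - w) T" by linarith
    hence "- M / real m \<le> inner (E (real m *\<^sub>R T) - w) T"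
      using mpos by (simp add: field_simps)
    moreover have "M / real m < \<rho> / 4"
    proof -
      have "4 * M < \<rho> * real m" using m \<rho> M0 by (smt (verit, best) mult_mono' divide_less_eq mult.commute)
      thus ?thesis using mpos \<rho> by (simp add: divide_less_eq field_simps)
    qed
    moreover have "inner (E (real m *\<^sub>R T) - y) T = inner (E (real m *\<^sub>R T) - w) T + \<rho> / 2"
      unfolding w_def using T by (simp add: inner_diff_left inner_add_left algebra_simps power2_norm_eq_inner[symmetric])
    ultimately have "inner (E (real m *\<^sub>R T) - y) T > 0" using \<rho> by linarith
    thus ?thesis unfolding F_def p by auto
  qed
  ultimately obtain r N where "r > 0" "\<forall>n\<ge>N. \<forall>x\<in>C. F n x \<ge> r"
    using dini_pos[of C F] by blast
  thus ?thesis unfolding C_def F_def by force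
qed

definition gsup :: "'a \<Rightarrow> real" where
  "gsup T = (SUP n::nat. inner (E (real n *\<^sub>R T)) T)"

definition Kset :: "real \<Rightarrow> 'a set" where
  "Kset c = S \<inter> cball 0 C2 \<inter> (\<Inter>T\<in>{T\<in>S. norm T = 1}. {x. inner T x \<le> gsup T - c})"

lemma bdd_g: "T \<in> S \<Longrightarrow> norm T = 1 \<Longrightarrow> bdd_above (range (\<lambda>n::nat. inner (E (real n *\<^sub>R T)) T))"
proof (rule bdd_aboveI2)
  fix n :: nat assume T: "T \<in> S" "norm T = 1"
  have "inner (E (real n *\<^sub>R T)) T \<le> norm (E (real n *\<^sub>R T)) * norm T" by (rule norm_cauchy_schwarz)
  also have "\<dots> \<le> C2" using bnd[OF scS[OF T(1)]] T by simp
  finally show "inner (E (real n *\<^sub>R T)) T \<le> C2" .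
qed

lemma g_upper: "T \<in> S \<Longrightarrow> norm T = 1 \<Longrightarrow> inner (E (real n *\<^sub>R T)) T \<le> gsup T"
  unfolding gsup_def by (rule cSUP_upper[OF _ bdd_g]) auto

lemma g_le: "T \<in> S \<Longrightarrow> norm T = 1 \<Longrightarrow> gsup T \<le> C2"
  unfolding gsup_def
proof (rule cSUP_least)
  fix n :: nat assume T: "T \<in> S" "norm T = 1"
  have "inner (E (real n *\<^sub>R T)) T \<le> norm (E (real n *\<^sub>R T)) * norm T" by (rule norm_cauchy_schwarz)
  also have "\<dots> \<le> C2" using bnd[OF scS[OF T(1)]] T by simp
  finally show "inner (E (real n *\<^sub>R T)) T \<le> C2" .
qed simp

lemma coreB:
  assumes y: "y \<in> S" and c: "c > 0"
    and H: "\<forall>T\<in>S. norm T = 1 \<longrightarrow> c \<le> inner (E (real N *\<^sub>R T) - y) T"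
  shows "y \<in> Kset c"
proof -
  have 1: "inner T y \<le> gsup T - c" if T: "T \<in> S" "norm T = 1" for T
  proof -
    have "c \<le> inner (E (real N *\<^sub>R T) - y) T" using H T by blast
    hence "c \<le> inner (E (real N *\<^sub>R T)) T - inner y T" by (simp only: inner_diff_left)
    thus ?thesis using g_upper[OF T, of N] inner_commute[of T y] by linarith
  qed
  have "norm y \<le> C2"
  proof (cases "y = 0")
    case True thus ?thesis using C2 by simp
  next
    case False
    define T where "T = (1 / norm y) *\<^sub>R y"
    have T: "T \<in> S" "norm T = 1" unfolding T_def using False y scS by auto
    have "norm y = inner T y" unfolding T_def using False by (simp add: power2_norm_eq_inner[symmetric] power2_eq_square)
    also have "\<dots> \<le> gsup T - c" by (rule 1[OF T])
    also have "\<dots> \<le> C2" using g_le[OF T] c by simp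
    finally show ?thesis .
  qed
  thus ?thesis unfolding Kset_def using y 1 by auto
qed

lemma Kset_compact: "compact (Kset c)"
proof -
  have "closed (Kset c)" unfolding Kset_def
    by (intro closed_Int closed_subspace[OF S] closed_cball closed_INT ballI closed_halfspace_le)
  moreover have "bounded (Kset c)" unfolding Kset_def by (meson Int_lower1 Int_lower2 bounded_cball bounded_subset le_infE)
  ultimately show ?thesis by (simp add: compact_eq_bounded_closed)
qed

lemma Kset_interior:
  assumes c: "c > 0"
  shows "Kset c \<subseteq> (top_of_set S) interior_of (E ` S)"
proof
  fix y assume y: "y \<in> Kset c"
  hence yS: "y \<in> S" unfolding Kset_def by auto
  define V where "V = S \<inter> ball y (c/2)"
  have "openin (top_of_set S) V" unfolding V_def by auto
  moreover have "y \<in> V" unfolding V_def using yS c by auto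
  moreover have "V \<subseteq> E ` S"
  proof
    fix z assume z: "z \<in> V"
    hence zS: "z \<in> S" and dz: "dist y z < c/2" unfolding V_def by auto
    define C where "C = {T\<in>S. norm T = 1}"
    define F where "F m T = inner (E (real m *\<^sub>R T) - z) T" for m T
    have "compact C" unfolding C_def by (rule sphere_compact)
    moreover have "continuous_on C (F m)" for m
      unfolding F_def
      apply (intro continuous_intros continuous_on_compose2[OF cont])
      by (auto simp: C_def intro: scS)
    moreover have "F m p \<le> F n p" if "p \<in> C" "m \<le> n" for p m n
      using monoN[of p m n] that unfolding F_def C_def by (auto simp: inner_diff_left)
    moreover have "\<exists>m. F m T > 0" if T: "T \<in> C" for T
    proof -
      have TS: "T \<in> S" "norm T = 1" using T unfolding C_def by auto
      have "inner T z - inner T y \<le> norm (z - y)"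
        using norm_cauchy_schwarz[of T "z - y"] TS by (simp add: inner_diff_right)
      moreover have "norm (z - y) < c / 2" using dz by (simp add: dist_norm norm_minus_commute)
      moreover have "inner T y \<le> gsup T - c" using y TS unfolding Kset_def by auto
      ultimately have "inner T z < gsup T" using c by linarith
      then obtain n where "inner T z < inner (E (real n *\<^sub>R T)) T"
        unfolding gsup_def using less_cSUP_iff[OF _ bdd_g[OF TS]] by auto
      thus ?thesis unfolding F_def by (auto simp: inner_diff_left inner_diff_right inner_commute)
    qed
    ultimately obtain r N where r: "r > 0" "\<forall>n\<ge>N. \<forall>x\<in>C. F n x \<ge> r"
      using dini_pos[of C F] by blast
    define R where "R = real (Suc N)"
    have R: "R > 0" unfolding R_def by simp
    show "z \<in> E ` S"
    proof (rule surj_brouwer[OF S ES cont zS R])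
      fix T assume T: "T \<in> S" "norm T = R"
      define U where "U = (1 / R) *\<^sub>R T"
      have U: "U \<in> C" unfolding U_def C_def using T R scS by auto
      have TU: "T = R *\<^sub>R U" unfolding U_def using R by simp
      have "r \<le> F (Suc N) U" using r U by auto
      hence "0 < inner (E (R *\<^sub>R U) - z) U" unfolding F_def R_def using r by simp
      hence "0 < R * inner (E (R *\<^sub>R U) - z) U" using R by simp
      thus "0 < inner (E T - z) T" using TU by simp
    qed
  qed
  ultimately show "y \<in> (top_of_set S) interior_of (E ` S)"
    unfolding interior_of_def by auto
qed

lemma main_equiv:
  fixes M :: "'b measure" and Y :: "'b \<Rightarrow> 'a"
  assumes YS: "\<And>x. Y x \<in> S"
  shows "(\<exists>K. compact K \<and> K \<subseteq> (top_of_set S) interior_of (E ` S) \<and> (AE x in M. Y x \<in> K))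
    \<longleftrightarrow> (\<exists>c>0. ereal c \<le> liminf (\<lambda>n::nat. essinf M
          (\<lambda>x. INF T\<in>{T\<in>S. norm T = 1}. ereal (inner (E (real n *\<^sub>R T) - Y x) T))))"
    (is "?L \<longleftrightarrow> ?R")
proof
  assume ?L
  then obtain K where K: "compact K" "K \<subseteq> (top_of_set S) interior_of (E ` S)" "AE x in M. Y x \<in> K"
    by blast
  obtain r N where r: "r > 0" "\<forall>n\<ge>N. \<forall>y\<in>K. \<forall>T\<in>S. norm T = 1 \<longrightarrow> r \<le> inner (E (real n *\<^sub>R T) - y) T"
    using coreA[OF K(1,2)] by blast
  have "eventually (\<lambda>n. ereal r \<le> essinf M
          (\<lambda>x. INF T\<in>{T\<in>S. norm T = 1}. ereal (inner (E (real n *\<^sub>R T) - Y x) T))) sequentially"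
    unfolding eventually_sequentially
  proof (intro exI allI impI)
    fix n assume n: "n \<ge> N"
    have "AE x in M. ereal r \<le> (INF T\<in>{T\<in>S. norm T = 1}. ereal (inner (E (real n *\<^sub>R T) - Y x) T))"
      using K(3) by (rule eventually_mono) (auto intro!: INF_greatest simp: r(2)[rule_format, OF n])
    thus "ereal r \<le> essinf M (\<lambda>x. INF T\<in>{T\<in>S. norm T = 1}. ereal (inner (E (real n *\<^sub>R T) - Y x) T))"
      unfolding essinf_def by (intro Sup_upper) (simp only: mem_Collect_eq)
  qed
  hence "ereal r \<le> liminf (\<lambda>n::nat. essinf M
          (\<lambda>x. INF T\<in>{T\<in>S. norm T = 1}. ereal (inner (E (real n *\<^sub>R T) - Y x) T)))"
    by (rule Liminf_bounded)
  thus ?R using r(1) by blast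
next
  assume ?R
  then obtain c where c: "c > 0" "ereal c \<le> liminf (\<lambda>n::nat. essinf M
          (\<lambda>x. INF T\<in>{T\<in>S. norm T = 1}. ereal (inner (E (real n *\<^sub>R T) - Y x) T)))" by blast
  have "ereal (c/2) < ereal c" using c by simp
  hence "eventually (\<lambda>n. ereal (c/2) < essinf M
          (\<lambda>x. INF T\<in>{T\<in>S. norm T = 1}. ereal (inner (E (real n *\<^sub>R T) - Y x) T))) sequentially"
    using c(2) by (intro less_LiminfD) (rule less_le_trans)
  then obtain N where "ereal (c/2) < essinf M
          (\<lambda>x. INF T\<in>{T\<in>S. norm T = 1}. ereal (inner (E (real N *\<^sub>R T) - Y x) T))"
    unfolding eventually_sequentially by blast
  then obtain z where z: "ereal (c/2) < z"
    "AE x in M. z \<le> (INF T\<in>{T\<in>S. norm T = 1}. ereal (inner (E (real N *\<^sub>R T) - Y x) T))"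
    unfolding essinf_def less_Sup_iff mem_Collect_eq by blast
  have "AE x in M. Y x \<in> Kset (c/2)"
    using z(2)
  proof (rule eventually_mono)
    fix x assume x: "z \<le> (INF T\<in>{T\<in>S. norm T = 1}. ereal (inner (E (real N *\<^sub>R T) - Y x) T))"
    have "\<forall>T\<in>S. norm T = 1 \<longrightarrow> c/2 \<le> inner (E (real N *\<^sub>R T) - Y x) T"
    proof (intro ballI impI)
      fix T assume "T \<in> S" "norm T = 1"
      hence "z \<le> ereal (inner (E (real N *\<^sub>R T) - Y x) T)"
        using x INF_lower[of T "{T\<in>S. norm T = 1}" "\<lambda>T. ereal (inner (E (real N *\<^sub>R T) - Y x) T)"]
        by (simp add: order_trans)
      hence "ereal (c/2) \<le> ereal (inner (E (real N *\<^sub>R T) - Y x) T)" using z(1) by (meson less_imp_le order_trans)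
      thus "c/2 \<le> inner (E (real N *\<^sub>R T) - Y x) T" by (simp only: ereal_less_eq)
    qed
    thus "Y x \<in> Kset (c/2)" using coreB[OF YS] c(1) by simp
  qed
  moreover have "c/2 > 0" using c(1) by simp
  ultimately show ?L using Kset_compact[of "c/2"] Kset_interior[of "c/2"] by blast
qed

end


lemma transpose_add': "transpose (A + B) = transpose A + transpose (B :: real^'n^'m)"
  by (simp add: transpose_def vec_eq_iff)

lemma subspace_Sym: "subspace (Sym :: (real^'d^'d) set)"
  unfolding subspace_def Sym_def
  by (auto simp: transpose_add' transpose_scalar transpose_def vec_eq_iff)

lemma sym_grad_Sym: "sym_grad G x \<in> Sym"
  unfolding sym_grad_def Sym_def by (simp add: transpose_add' transpose_scalar add.commute)

theorem lemmaA2: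
  shows
  "(\<forall>(D :: real^'N^'d \<Rightarrow> real^'N^'d) (D' :: real^'N^'d \<Rightarrow> ((real^'N^'d) \<Rightarrow>\<^sub>L (real^'N^'d)))
       (C0::real) C1 C2 (h::real \<Rightarrow> real) (\<Omega> :: (real^'d) set)
       (u0 :: real^'d \<Rightarrow> real^'N) (G :: real^'d \<Rightarrow> real^'N^'d).
     (\<forall>T. (D has_derivative blinfun_apply (D' T)) (at T)) \<and> continuous_on UNIV D' \<and>
     C0 \<ge> 0 \<and> C1 > 0 \<and> C2 > 0 \<and>
     (\<forall>t\<ge>0. h t > 0) \<and> (\<forall>s t. 0 \<le> s \<longrightarrow> s \<le> t \<longrightarrow> h t \<le> h s) \<and> continuous_on {0..} h \<and>
     (\<forall>T. inner (D T) T \<ge> C1 * norm T - C0) \<and>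
     (\<forall>T. norm (D T) \<le> C2) \<and>
     (\<forall>T B. h (norm T) * (norm B)\<^sup>2 \<le> inner (blinfun_apply (D' T) B) B \<and>
            inner (blinfun_apply (D' T) B) B \<le> C2 * (norm B)\<^sup>2 / (1 + norm T)) \<and>
     open \<Omega> \<and> connected \<Omega> \<and> bounded \<Omega> \<and> \<Omega> \<noteq> {} \<and>
     W1inf \<Omega> u0 \<and> weak_gradient \<Omega> u0 G
     \<longrightarrow>
     ((\<exists>K. compact K \<and> K \<subseteq> interior (range D) \<and> (AE x in lebesgue_on \<Omega>. G x \<in> K))
      \<longleftrightarrow>
      (\<exists>c>0. ereal c \<le> liminf (\<lambda>n::nat. essinf (lebesgue_on \<Omega>)
          (\<lambda>x. INF T\<in>{T. norm T = 1}. ereal (inner (D (real n *\<^sub>R T) - G x) T))))))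
   \<and>
   (\<forall>(E :: real^'d^'d \<Rightarrow> real^'d^'d) (E' :: real^'d^'d \<Rightarrow> ((real^'d^'d) \<Rightarrow>\<^sub>L (real^'d^'d)))
       (C0::real) C1 C2 (h::real \<Rightarrow> real) (\<Omega> :: (real^'d) set)
       (u0 :: real^'d \<Rightarrow> real^'d) (G :: real^'d \<Rightarrow> real^'d^'d).
     (\<forall>T\<in>Sym. E T \<in> Sym) \<and>
     (\<forall>T\<in>Sym. (E has_derivative blinfun_apply (E' T)) (at T within Sym)) \<and> continuous_on Sym E' \<and>
     C0 \<ge> 0 \<and> C1 > 0 \<and> C2 > 0 \<and>
     (\<forall>t\<ge>0. h t > 0) \<and> (\<forall>s t. 0 \<le> s \<longrightarrow> s \<le> t \<longrightarrow> h t \<le> h s) \<and> continuous_on {0..} h \<and>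
     (\<forall>T\<in>Sym. inner (E T) T \<ge> C1 * norm T - C0) \<and>
     (\<forall>T\<in>Sym. norm (E T) \<le> C2) \<and>
     (\<forall>T\<in>Sym. \<forall>B\<in>Sym. h (norm T) * (norm B)\<^sup>2 \<le> inner (blinfun_apply (E' T) B) B \<and>
            inner (blinfun_apply (E' T) B) B \<le> C2 * (norm B)\<^sup>2 / (1 + norm T)) \<and>
     open \<Omega> \<and> connected \<Omega> \<and> bounded \<Omega> \<and> \<Omega> \<noteq> {} \<and>
     W11 \<Omega> u0 \<and> weak_gradient \<Omega> u0 G
     \<longrightarrow>
     ((\<exists>K. compact K \<and> K \<subseteq> (top_of_set Sym) interior_of (E ` Sym) \<and>
           (AE x in lebesgue_on \<Omega>. sym_grad G x \<in> K))
      \<longleftrightarrow>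
      (\<exists>c>0. ereal c \<le> liminf (\<lambda>n::nat. essinf (lebesgue_on \<Omega>)
          (\<lambda>x. INF T\<in>{T\<in>Sym. norm T = 1}. ereal (inner (E (real n *\<^sub>R T) - sym_grad G x) T))))))"
  
proof (intro conjI allI impI)
  fix D :: "real^'N^'d \<Rightarrow> real^'N^'d" and D' :: "real^'N^'d \<Rightarrow> ((real^'N^'d) \<Rightarrow>\<^sub>L (real^'N^'d))"
    and C0 C1 C2 :: real and h :: "real \<Rightarrow> real" and \<Omega> :: "(real^'d) set"
    and u0 :: "real^'d \<Rightarrow> real^'N" and G :: "real^'d \<Rightarrow> real^'N^'d"
  assume H: "(\<forall>T. (D has_derivative blinfun_apply (D' T)) (at T)) \<and> continuous_on UNIV D' \<and>
     C0 \<ge> 0 \<and> C1 > 0 \<and> C2 > 0 \<and>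
     (\<forall>t\<ge>0. h t > 0) \<and> (\<forall>s t. 0 \<le> s \<longrightarrow> s \<le> t \<longrightarrow> h t \<le> h s) \<and> continuous_on {0..} h \<and>
     (\<forall>T. inner (D T) T \<ge> C1 * norm T - C0) \<and>
     (\<forall>T. norm (D T) \<le> C2) \<and>
     (\<forall>T B. h (norm T) * (norm B)\<^sup>2 \<le> inner (blinfun_apply (D' T) B) B \<and>
            inner (blinfun_apply (D' T) B) B \<le> C2 * (norm B)\<^sup>2 / (1 + norm T)) \<and>
     open \<Omega> \<and> connected \<Omega> \<and> bounded \<Omega> \<and> \<Omega> \<noteq> {} \<and>
     W1inf \<Omega> u0 \<and> weak_gradient \<Omega> u0 G"
  have der: "\<forall>T\<in>UNIV. (D has_derivative blinfun_apply (D' T)) (at T within UNIV)" using H by simp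
  have pos: "\<forall>T\<in>UNIV. \<forall>B\<in>UNIV. inner (blinfun_apply (D' T) B) B \<ge> 0"
  proof (intro ballI)
    fix T B :: "real^'N^'d"
    have "h (norm T) > 0" using H by simp
    hence "0 \<le> h (norm T) * (norm B)\<^sup>2" by simp
    thus "inner (blinfun_apply (D' T) B) B \<ge> 0" using H by (meson order_trans)
  qed
  interpret mop UNIV D C2
    apply unfold_locales
    using cont_from_deriv[OF der] mono_from_deriv[OF subspace_UNIV der pos] H by auto
  show "(\<exists>K. compact K \<and> K \<subseteq> interior (range D) \<and> (AE x in lebesgue_on \<Omega>. G x \<in> K))
      \<longleftrightarrow>
      (\<exists>c>0. ereal c \<le> liminf (\<lambda>n::nat. essinf (lebesgue_on \<Omega>)
          (\<lambda>x. INF T\<in>{T. norm T = 1}. ereal (inner (D (real n *\<^sub>R T) - G x) T))))"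
    using main_equiv[of G "lebesgue_on \<Omega>"] by simp
next
  fix E :: "real^'d^'d \<Rightarrow> real^'d^'d" and E' :: "real^'d^'d \<Rightarrow> ((real^'d^'d) \<Rightarrow>\<^sub>L (real^'d^'d))"
    and C0 C1 C2 :: real and h :: "real \<Rightarrow> real" and \<Omega> :: "(real^'d) set"
    and u0 :: "real^'d \<Rightarrow> real^'d" and G :: "real^'d \<Rightarrow> real^'d^'d"
  assume H: "(\<forall>T\<in>Sym. E T \<in> Sym) \<and>
     (\<forall>T\<in>Sym. (E has_derivative blinfun_apply (E' T)) (at T within Sym)) \<and> continuous_on Sym E' \<and>
     C0 \<ge> 0 \<and> C1 > 0 \<and> C2 > 0 \<and>
     (\<forall>t\<ge>0. h t > 0) \<and> (\<forall>s t. 0 \<le> s \<longrightarrow> s \<le> t \<longrightarrow> h t \<le> h s) \<and> continuous_on {0..} h \<and>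
     (\<forall>T\<in>Sym. inner (E T) T \<ge> C1 * norm T - C0) \<and>
     (\<forall>T\<in>Sym. norm (E T) \<le> C2) \<and>
     (\<forall>T\<in>Sym. \<forall>B\<in>Sym. h (norm T) * (norm B)\<^sup>2 \<le> inner (blinfun_apply (E' T) B) B \<and>
            inner (blinfun_apply (E' T) B) B \<le> C2 * (norm B)\<^sup>2 / (1 + norm T)) \<and>
     open \<Omega> \<and> connected \<Omega> \<and> bounded \<Omega> \<and> \<Omega> \<noteq> {} \<and>
     W11 \<Omega> u0 \<and> weak_gradient \<Omega> u0 G"
  have der: "\<forall>T\<in>Sym. (E has_derivative blinfun_apply (E' T)) (at T within Sym)" using H by simp
  have pos: "\<forall>T\<in>Sym. \<forall>B\<in>Sym. inner (blinfun_apply (E' T) B) B \<ge> 0"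
  proof (intro ballI)
    fix T B :: "real^'d^'d" assume TB: "T \<in> Sym" "B \<in> Sym"
    have "h (norm T) > 0" using H by simp
    hence "0 \<le> h (norm T) * (norm B)\<^sup>2" by simp
    thus "inner (blinfun_apply (E' T) B) B \<ge> 0" using H TB by (meson order_trans)
  qed
  interpret mop Sym E C2
    apply unfold_locales
    using subspace_Sym cont_from_deriv[OF der] mono_from_deriv[OF subspace_Sym der pos] H by auto
  show "(\<exists>K. compact K \<and> K \<subseteq> (top_of_set Sym) interior_of (E ` Sym) \<and>
           (AE x in lebesgue_on \<Omega>. sym_grad G x \<in> K))
      \<longleftrightarrow>
      (\<exists>c>0. ereal c \<le> liminf (\<lambda>n::nat. essinf (lebesgue_on \<Omega>)
          (\<lambda>x. INF T\<in>{T\<in>Sym. norm T = 1}. ereal (inner (E (real n *\<^sub>R T) - sym_grad G x) T))))"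
    by (rule main_equiv[of "sym_grad G" "lebesgue_on \<Omega>"]) (rule sym_grad_Sym)
qed

end
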